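(* Let $b\in\mathbb{N}$ and $0\le a\le b-1$ be integers, and let $m,n\ge 2$ be the minimal integers with $ma\equiv a \pmod b$ and $a^{n}\equiv a\pmod b$ (assumed to exist). Consider the polyadic ring $\mathbb{Z}^{[a,b]}_{(m,n)}$. If $\mathbb{Z}^{[a,b]}_{(m,n)}$ contains a polyadic prime number, then either $a=1$ and $(m,n)=(b+1,2)$, i.e. the ring is $\mathbb{Z}^{[1,b]}_{(b+1,2)}$, or $a=b-1$ and $(m,n)=(b+1,3)$, i.e. the ring is $\mathbb{Z}^{[b-1,b]}_{(b+1,3)}$.
   Context: The ring of polyadic integer numbers $\mathbb{Z}^{[a,b]}_{(m,n)}$ is the congruence class $[[a]]_b=\{a+bk : k\in\mathbb{Z}\}$ equipped with the $m$-ary addition $\nu_m[x_1,\dots,x_m]=x_1+\dots+x_m$ and the $n$-ary multiplication $\mu_n[x_1,\dots,x_n]=x_1x_2\cdots x_n$ (ordinary integer sum and product); the choice of $m,n$ guarantees these operations are closed in $[[a]]_b$. For $\ell\in\mathbb{N}$, $\mu_n^{(\ell)}$ denotes the $\ell$-fold iterated composition of $\mu_n$, which takes $\ell(n-1)+1$ arguments. A unit of the ring is an element $e$ with $\mu_n[e,\dots,e,x]=x$ ($n-1$ copies of $e$) for all $x$ in the ring. A polyadic prime number is an element $x$ of the ring such that the ring has a unit $e$ and the only expansion of $x$ as a polyadic product $x=\mu_n^{(\ell)}[x_{1},\dots,x_{\ell(n-1)+1}]$ of elements of the ring is the trivial one $x=\mu_n^{(\ell)}[x,e,\dots,e]$ (with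 $\ell(n-1)$ copies of $e$). *)

theory Defs
  imports "HOL-Number_Theory.Cong" "HOL-Library.Multiset"
begin

definition pcarrier :: "int \<Rightarrow> int \<Rightarrow> int set" where
  "pcarrier a b = {x. \<exists>k::int. x = a + b * k}"

definition pmul :: "int list \<Rightarrow> int" where
  "pmul xs = prod_list xs"

definition punit :: "int \<Rightarrow> int \<Rightarrow> nat \<Rightarrow> int \<Rightarrow> bool" where
  "punit a b n e \<longleftrightarrow> e \<in> pcarrier a b \<and>
     (\<forall>x \<in> pcarrier a b. pmul (replicate (n - 1) e @ [x]) = x)"

text \<open>Expansion of x as an l-fold iterated product mu_n^(l) of l(n-1)+1 ring elements.
  The iterated composition of mu_n equals the product of all its arguments.\<close>
definition pexpansion :: "int \<Rightarrow> int \<Rightarrow> nat \<Rightarrow> int \<Rightarrow> nat \<Rightarrow> int list \<Rightarrow> bool" where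
  "pexpansion a b n x l xs \<longleftrightarrow> length xs = l * (n - 1) + 1 \<and>
     set xs \<subseteq> pcarrier a b \<and> pmul xs = x"

definition polyadic_prime :: "int \<Rightarrow> int \<Rightarrow> nat \<Rightarrow> nat \<Rightarrow> int \<Rightarrow> bool" where
  "polyadic_prime a b m n x \<longleftrightarrow> x \<in> pcarrier a b \<and> (\<exists>e. punit a b n e) \<and>
     (\<forall>l xs. pexpansion a b n x l xs \<longrightarrow>
        (\<exists>e. punit a b n e \<and> mset xs = mset (x # replicate (l * (n - 1)) e)))"

end

theory Submission
  imports Defs
begin

lemma unit_pm1:
  fixes e :: int assumes "e ^ k = 1" "k \<ge> 1"
  shows "e = 1 \<or> (e = -1 \<and> even k)"
proof -
  obtain j where k: "k = Suc j" using assms(2) by (cases k) auto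
  have "e dvd 1" using assms(1) unfolding k by (metis dvd_triv_left power_Suc)
  hence "e = 1 \<or> e = -1" by (simp add: zdvd1_eq abs_if split: if_splits; linarith)
  thus ?thesis using assms(1) by (auto simp: minus_one_power_iff split: if_splits)
qed

theorem mainTheorem1:
  fixes a b :: int and m n :: nat
  assumes "b \<ge> 1" and "0 \<le> a" and "a \<le> b - 1"
    and "m \<ge> 2" and "[int m * a = a] (mod b)"
    and "\<forall>k::nat. 2 \<le> k \<and> k < m \<longrightarrow> \<not> [int k * a = a] (mod b)"
    and "n \<ge> 2" and "[a ^ n = a] (mod b)"
    and "\<forall>k::nat. 2 \<le> k \<and> k < n \<longrightarrow> \<not> [a ^ k = a] (mod b)"
    and "\<exists>x. polyadic_prime a b m n x"
  shows "(a = 1 \<and> int m = b + 1 \<and> n = 2) \<or> (a = b - 1 \<and> int m = b + 1 \<and> n = 3)"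
proof -
  obtain x where px: "polyadic_prime a b m n x" using assms(10) by blast
  then obtain e where eu: "punit a b n e" unfolding polyadic_prime_def by blast
  have ab: "a + b \<in> pcarrier a b" unfolding pcarrier_def by (auto intro: exI[of _ 1])
  have "e ^ (n - 1) * (a + b) = a + b"
    using eu ab unfolding punit_def pmul_def by auto
  moreover have "a + b \<noteq> 0" using assms by linarith
  ultimately have en: "e ^ (n - 1) = 1" by simp
  have epm: "e = 1 \<or> (e = -1 \<and> even (n - 1))" using unit_pm1[OF en] assms(7) by simp
  obtain k where ek: "e = a + b * k" using eu unfolding punit_def pcarrier_def by blast
  show ?thesis
  proof (cases "b = 1")
    case True
    hence a0: "a = 0" using assms by simp
    have n2: "n = 2"
    proof (rule ccontr)
      assume "n \<noteq> 2"
      hence "2 < n" using assms(7) by simp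
      thus False using assms(9) a0 True by (auto simp: cong_def)
    qed
    have car: "pcarrier a b = UNIV" using True a0 unfolding pcarrier_def
      by auto
    have "pexpansion a b n x 2 [x, -1, -1]"
      unfolding pexpansion_def pmul_def using car n2 by simp
    then obtain e' where e': "punit a b n e'" and ms: "mset [x, -1, -1] = mset (x # replicate 2 e')"
      using px n2 unfolding polyadic_prime_def by fastforce
    have "pmul (replicate (n - 1) e' @ [1]) = 1" using e' car unfolding punit_def by blast
    hence "e' = 1" using n2 by (simp add: pmul_def)
    hence "count (mset [x, -1, -1]) (-1) = count (mset (x # replicate 2 e')) (-1)" using ms by simp
    thus ?thesis using \<open>e' = 1\<close> by (cases "x = -1") auto
  next
    case False
    hence b2: "b \<ge> 2" using assms(1) by simp
    have mb: "int m = b + 1" if a1: "b dvd (int m * a - a)" and cop: "b dvd (int m - 1) \<or> a = 1"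
      and minc: "[int (nat (b+1)) * a = a] (mod b)"
    proof -
      have dv: "b dvd (int m - 1)" using cop a1 by auto
      have "int m - 1 \<ge> b"
      proof -
        obtain c where c: "int m - 1 = b * c" using dv by blast
        have "c > 0"
        proof (rule ccontr)
          assume "\<not> c > 0" hence "b * c \<le> 0" using b2 by (simp add: mult_nonneg_nonpos)
          thus False using c assms(4) by linarith
        qed
        hence "b * c \<ge> b * 1" using b2 by (intro mult_left_mono) auto
        thus ?thesis using c by simp
      qed
      moreover have "\<not> (nat (b+1) < m)"
      proof
        assume "nat (b+1) < m"
        moreover have "2 \<le> nat (b+1)" using b2 by simp
        ultimately show False using assms(6) minc by blast
      qed
      ultimately show ?thesis using b2 by (simp add: not_less nat_le_iff)
    qed
    from epm show ?thesis
    proof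
      assume e1: "e = 1"
      have "k = 0"
      proof (rule ccontr)
        assume "k \<noteq> 0"
        hence "k \<ge> 1 \<or> k \<le> -1" by linarith
        thus False
        proof
          assume "k \<ge> 1" hence "b * k \<ge> b * 1" using b2 by (intro mult_left_mono) auto
          thus False using ek e1 assms(2) b2 by linarith
        next
          assume "k \<le> -1" hence "b * k \<le> b * (-1)" using b2 by (intro mult_left_mono) auto
          thus False using ek e1 assms(3) b2 by linarith
        qed
      qed
      hence a1: "a = 1" using ek e1 by simp
      have "int m = b + 1"
        using mb[of] assms(5) a1 b2 by (auto simp: cong_iff_dvd_diff)
      moreover have "n = 2"
      proof (rule ccontr)
        assume "n \<noteq> 2"
        hence "2 < n" using assms(7) by simp
        thus False using assms(9) a1 by auto
      qed
      ultimately show ?thesis using a1 by simp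
    next
      assume e2: "e = -1 \<and> even (n - 1)"
      have "k = -1"
      proof (rule ccontr)
        assume "k \<noteq> -1"
        hence "k \<ge> 0 \<or> k \<le> -2" by linarith
        thus False
        proof
          assume "k \<ge> 0" hence "b * k \<ge> 0" using b2 by simp
          thus False using ek e2 assms(2) by linarith
        next
          assume "k \<le> -2" hence "b * k \<le> b * (-2)" using b2 by (intro mult_left_mono) auto
          thus False using ek e2 assms(3) b2 by linarith
        qed
      qed
      hence ab1: "a = b - 1" using ek e2 by simp
      have dd: "b dvd (int m - 1)" if "b dvd (int m * a - a)"
      proof -
        have "int m * a - a = b * (int m - 1) - (int m - 1)" unfolding ab1 by (simp add: algebra_simps)
        hence "int m - 1 = b * (int m - 1) - (int m * a - a)" by simp
        moreover have "b dvd b * (int m - 1) - (int m * a - a)" by (rule dvd_diff[OF dvd_triv_left that])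
        ultimately show ?thesis by simp
      qed
      have "int (nat (b+1)) = b + 1" using b2 by simp
      hence "int (nat (b+1)) * a - a = b * a" by (simp add: algebra_simps)
      hence mc: "[int (nat (b+1)) * a = a] (mod b)" unfolding cong_iff_dvd_diff by simp
      have d1: "b dvd (int m * a - a)" using assms(5) by (simp add: cong_iff_dvd_diff)
      have m: "int m = b + 1" using mb[OF d1 _ mc] dd[OF d1] by blast
      show ?thesis
      proof (cases "b = 2")
        case True
        hence a1: "a = 1" using ab1 by simp
        have "n = 2"
        proof (rule ccontr)
          assume "n \<noteq> 2"
          hence "2 < n" using assms(7) by simp
          thus False using assms(9) a1 by auto
        qed
        thus ?thesis using a1 m by simp
      next
        case False
        hence b3: "b \<ge> 3" using b2 by simp
        have "n \<noteq> 2" using e2 by auto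
        hence n3: "n \<ge> 3" using assms(7) by simp
        have "n = 3"
        proof (rule ccontr)
          assume "n \<noteq> 3"
          hence "3 < n" using n3 by simp
          moreover have "[a ^ 3 = a] (mod b)"
          proof -
            have "[a = -1] (mod b)" using ab1 by (simp add: cong_iff_dvd_diff)
            hence "[a ^ 3 = (-1) ^ 3] (mod b)" by (rule cong_pow)
            hence "[a ^ 3 = -1] (mod b)" by simp
            thus ?thesis using cong_trans cong_sym \<open>[a = -1] (mod b)\<close> by blast
          qed
          ultimately show False using assms(9) by auto
        qed
        thus ?thesis using ab1 m by simp
      qed
    qed
  qed
qed

end
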